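(* Let $(\mathscr{G},\mathscr{H},\mathscr{F},\iota_v,\varphi_p)$ be an equivariant sheaf of right cosets on a finite-dimensional real vector space $V$, let $\Lambda\subset V$ be a lattice, and let $p,q\ge2$ be multiplicatively independent natural numbers. Let $s\in\Gamma(V,\mathscr{F})$ and suppose there are $\Lambda$-periodic $A,B\in\Gamma(V,\mathscr{G})$ with $m_p^*(s)=As$ and $m_q^*(s)=Bs$. Then there exists a lattice $\Lambda'\subset\Lambda$ (depending on $s$) such that for every $z\in V\setminus\mathbb{Q}\Lambda$ and every $\lambda\in\Lambda'$ we have $s_{z+\lambda}=\iota_\lambda(s_z)$. If furthermore $\gcd(p,q)=1$, one may take $\Lambda'=\Lambda$.
   Context: $V$ carries its classical topology; $\mathbb{Q}\Lambda$ is the $\mathbb{Q}$-span of $\Lambda$. An equivariant sheaf of right cosets consists of: a sheaf of groups $\mathscr{G}$ on $V$, a subsheaf of subgroups $\mathscr{H}$, and the sheaf $\mathscr{F}=\mathscr{G}/\mathscr{H}$ of right cosets (pointed by the trivial coset $0_x$ in each stalk, with left $\mathscr{G}$-action), such that: (Dis) for every open $U$ and $f\in\mathscr{G}(U)$ the set $\{x\in U: f_x\notin\mathscr{H}_x\}$ meets every compact subset of $U$ in a finite set; for every $v\in V$ there are sheaf isomorphisms $\mathscr{G}\simeq t_v^*\mathscr{G}$ ($t_v(x)=x+v$) inducing $\iota_v:\mathscr{G}_x\to\mathscr{G}_{x+v}$ with $\iota_v\circ\iota_u=\iota_{u+v}$; for every real $p\neq0$ there are sheaf isomorphisms $\mathscr{G}\simeq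 m_p^*\mathscr{G}$ ($m_p(x)=px$) inducing $\varphi_p:\mathscr{G}_x\to\mathscr{G}_{px}$ with $\varphi_q\circ\varphi_p=\varphi_{pq}$; all preserve $\mathscr{H}$ (hence act on $\mathscr{F}$); and $\iota_{pv}\circ\varphi_p=\varphi_p\circ\iota_v$ on $\mathscr{G}_x$. For global sections, $(m_p^*s)_x=\varphi_p(s_{x/p})$ and $(t_v^*s)_x=\iota_v(s_{x-v})$. A lattice is a discrete subgroup spanning $V$; a section is $\Lambda$-periodic if $t_\lambda^*s=s$ for all $\lambda\in\Lambda$. *)

theory Defs
  imports "HOL-Analysis.Analysis" "HOL-Algebra.Coset"
begin

text \<open>Sheaves are modelled in the etale-space style: a sheaf of groups on V is given by
its stalk groups G x (all living in one ambient HOL type 'g) and the predicate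
sect U f ("f restricted to the open set U is a section over U"); germs are values.\<close>

definition sheaf_of_groups ::
  "('v::topological_space \<Rightarrow> 'g monoid) \<Rightarrow> ('v set \<Rightarrow> ('v \<Rightarrow> 'g) \<Rightarrow> bool) \<Rightarrow> bool" where
  "sheaf_of_groups G sect \<longleftrightarrow>
     (\<forall>x. group (G x)) \<and>
     (\<forall>U f. sect U f \<longrightarrow> open U \<and> (\<forall>x\<in>U. f x \<in> carrier (G x))) \<and>
     (\<forall>U W f. sect U f \<and> open W \<and> W \<subseteq> U \<longrightarrow> sect W f) \<and>
     (\<forall>U f g. sect U f \<and> (\<forall>x\<in>U. f x = g x) \<longrightarrow> sect U g) \<and>
     (\<forall>U f. open U \<and> (\<forall>x\<in>U. \<exists>W. open W \<and> x \<in> W \<and> W \<subseteq> U \<and> sect W f) \<longrightarrow> sect U f) \<and>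
     (\<forall>U f g x. sect U f \<and> sect U g \<and> x \<in> U \<and> f x = g x \<longrightarrow>
        (\<exists>W. open W \<and> x \<in> W \<and> W \<subseteq> U \<and> (\<forall>y\<in>W. f y = g y))) \<and>
     (\<forall>x a. a \<in> carrier (G x) \<longrightarrow> (\<exists>U f. x \<in> U \<and> sect U f \<and> f x = a)) \<and>
     (\<forall>U. open U \<longrightarrow> sect U (\<lambda>x. \<one>\<^bsub>G x\<^esub>)) \<and>
     (\<forall>U f g. sect U f \<and> sect U g \<longrightarrow> sect U (\<lambda>x. f x \<otimes>\<^bsub>G x\<^esub> g x)) \<and>
     (\<forall>U f. sect U f \<longrightarrow> sect U (\<lambda>x. inv\<^bsub>G x\<^esub> (f x)))"

text \<open>A subsheaf of subgroups, given by its stalks H x (the etale subspace is open).\<close>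
definition subsheaf_of_subgroups ::
  "('v::topological_space \<Rightarrow> 'g monoid) \<Rightarrow> ('v set \<Rightarrow> ('v \<Rightarrow> 'g) \<Rightarrow> bool) \<Rightarrow> ('v \<Rightarrow> 'g set) \<Rightarrow> bool" where
  "subsheaf_of_subgroups G sect H \<longleftrightarrow>
     (\<forall>x. subgroup (H x) (G x)) \<and>
     (\<forall>U f x. sect U f \<and> x \<in> U \<and> f x \<in> H x \<longrightarrow>
        (\<exists>W. open W \<and> x \<in> W \<and> W \<subseteq> U \<and> (\<forall>y\<in>W. f y \<in> H y)))"

text \<open>Global sections of the quotient sheaf F = G/H of cosets g H (stalkwise l_coset),
 i.e. functions into cosets which locally lift to sections of G.\<close>
definition coset_global_section ::
  "('v::topological_space \<Rightarrow> 'g monoid) \<Rightarrow> ('v set \<Rightarrow> ('v \<Rightarrow> 'g) \<Rightarrow> bool) \<Rightarrow> ('v \<Rightarrow> 'g set)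
    \<Rightarrow> ('v \<Rightarrow> 'g set) \<Rightarrow> bool" where
  "coset_global_section G sect H s \<longleftrightarrow>
     (\<forall>x. \<exists>W f. open W \<and> x \<in> W \<and> sect W f \<and> (\<forall>y\<in>W. s y = f y <#\<^bsub>G y\<^esub> H y))"

definition equivariant_sheaf_of_cosets ::
  "('v::euclidean_space \<Rightarrow> 'g monoid) \<Rightarrow> ('v set \<Rightarrow> ('v \<Rightarrow> 'g) \<Rightarrow> bool) \<Rightarrow> ('v \<Rightarrow> 'g set)
    \<Rightarrow> ('v \<Rightarrow> 'v \<Rightarrow> 'g \<Rightarrow> 'g) \<Rightarrow> (real \<Rightarrow> 'v \<Rightarrow> 'g \<Rightarrow> 'g) \<Rightarrow> bool" where
  "equivariant_sheaf_of_cosets G sect H iota phi \<longleftrightarrow>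
     sheaf_of_groups G sect \<and> subsheaf_of_subgroups G sect H \<and>
     \<comment> \<open>(Dis)\<close>
     (\<forall>U f K. sect U f \<and> compact K \<and> K \<subseteq> U \<longrightarrow> finite {x\<in>K. f x \<notin> H x}) \<and>
     \<comment> \<open>translations: iota v x : G_x \<rightarrow> G_(x+v), inducing G \<simeq> t_v^* G\<close>
     (\<forall>v x. iota v x \<in> iso (G x) (G (x + v))) \<and>
     (\<forall>v U f. open U \<longrightarrow>
        (sect U f \<longleftrightarrow> sect ((\<lambda>y. y + v) ` U) (\<lambda>y. iota v (y - v) (f (y - v))))) \<and>
     (\<forall>u v x g. g \<in> carrier (G x) \<longrightarrow> iota v (x + u) (iota u x g) = iota (u + v) x g) \<and>
     (\<forall>v x. iota v x ` H x = H (x + v)) \<and>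
     \<comment> \<open>dilations: phi p x : G_x \<rightarrow> G_(p x), inducing G \<simeq> m_p^* G\<close>
     (\<forall>p x. p \<noteq> 0 \<longrightarrow> phi p x \<in> iso (G x) (G (p *\<^sub>R x))) \<and>
     (\<forall>p U f. p \<noteq> 0 \<and> open U \<longrightarrow>
        (sect U f \<longleftrightarrow>
         sect ((\<lambda>y. p *\<^sub>R y) ` U) (\<lambda>y. phi p (inverse p *\<^sub>R y) (f (inverse p *\<^sub>R y))))) \<and>
     (\<forall>p q x g. p \<noteq> 0 \<and> q \<noteq> 0 \<and> g \<in> carrier (G x) \<longrightarrow>
        phi q (p *\<^sub>R x) (phi p x g) = phi (p * q) x g) \<and>
     (\<forall>p x. p \<noteq> 0 \<longrightarrow> phi p x ` H x = H (p *\<^sub>R x)) \<and>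
     \<comment> \<open>compatibility iota_(pv) o phi_p = phi_p o iota_v on G_x\<close>
     (\<forall>p v x g. p \<noteq> 0 \<and> g \<in> carrier (G x) \<longrightarrow>
        iota (p *\<^sub>R v) (p *\<^sub>R x) (phi p x g) = phi p (x + v) (iota v x g))"

definition is_lattice :: "'v::euclidean_space set \<Rightarrow> bool" where
  "is_lattice L \<longleftrightarrow> 0 \<in> L \<and> (\<forall>x\<in>L. \<forall>y\<in>L. x - y \<in> L) \<and> discrete L \<and> span L = UNIV"

definition rat_span :: "'v::real_vector set \<Rightarrow> 'v set" where
  "rat_span L = {x. \<exists>S c. finite S \<and> S \<subseteq> L \<and> (\<forall>l\<in>S. c l \<in> \<rat>) \<and> x = (\<Sum>l\<in>S. c l *\<^sub>R l)}"

definition mult_independent :: "nat \<Rightarrow> nat \<Rightarrow> bool" where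
  "mult_independent p q \<longleftrightarrow> (\<forall>a b::nat. p ^ a = q ^ b \<longrightarrow> a = 0 \<and> b = 0)"

end

theory Submission
  imports Defs
begin

lemma lat_neg: "is_lattice L \<Longrightarrow> a \<in> L \<Longrightarrow> - a \<in> L"
  unfolding is_lattice_def by (metis diff_0)

lemma lat_add: "is_lattice L \<Longrightarrow> a \<in> L \<Longrightarrow> b \<in> L \<Longrightarrow> a + b \<in> L"
  using lat_neg[of L b] unfolding is_lattice_def by (metis diff_minus_eq_add)

lemma lat_nat: "is_lattice L \<Longrightarrow> a \<in> L \<Longrightarrow> real n *\<^sub>R a \<in> L"
proof (induction n)
  case 0 then show ?case by (simp add: is_lattice_def)
next
  case (Suc n) then show ?case using lat_add[of L "real n *\<^sub>R a" a] by (simp add: algebra_simps)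
qed

lemma lat_int: "is_lattice L \<Longrightarrow> a \<in> L \<Longrightarrow> real_of_int k *\<^sub>R a \<in> L"
proof (cases "k \<ge> 0")
  case True
  assume "is_lattice L" "a \<in> L"
  then have "real (nat k) *\<^sub>R a \<in> L" by (rule lat_nat)
  then show ?thesis using True by simp
next
  case False
  assume "is_lattice L" "a \<in> L"
  then have "- (real (nat (-k)) *\<^sub>R a) \<in> L" by (intro lat_neg lat_nat)
  moreover have "real_of_int k = - real (nat (-k))" using False by simp
  ultimately show ?thesis by (simp only: scaleR_minus_left)
qed

lemma lat_sum:
  assumes "is_lattice L" "finite S" "\<And>b. b \<in> S \<Longrightarrow> f b \<in> L"
  shows "sum f S \<in> L"
  using assms(2,3)
proof (induction S rule: finite_induct)
  case empty then show ?case using assms(1) by (simp add: is_lattice_def)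
next
  case (insert x F) then show ?case using lat_add[OF assms(1)] by simp
qed

lemma lat_fund:
  fixes L :: "'v::euclidean_space set"
  assumes "is_lattice L"
  shows "\<exists>R. \<forall>x. \<exists>\<mu>\<in>L. norm (x - \<mu>) \<le> R"
proof -
  obtain Bs where Bs: "Bs \<subseteq> L" "independent Bs" "L \<subseteq> span Bs"
    by (rule maximal_independent_subset)
  have fin: "finite Bs" using Bs(2) by (rule finiteI_independent)
  have "span L = UNIV" using assms by (simp add: is_lattice_def)
  then have spB: "span Bs = UNIV" using Bs(3)
    by (metis span_mono span_span top.extremum_uniqueI)
  show ?thesis
  proof (intro exI allI)
    fix x :: 'v
    have "x \<in> range (\<lambda>u. \<Sum>v\<in>Bs. u v *\<^sub>R v)" using spB span_finite[OF fin] by auto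
    then obtain u where u: "x = (\<Sum>v\<in>Bs. u v *\<^sub>R v)" by auto
    define \<mu> where "\<mu> = (\<Sum>v\<in>Bs. real_of_int \<lfloor>u v\<rfloor> *\<^sub>R v)"
    have "\<mu> \<in> L" unfolding \<mu>_def using assms fin Bs(1)
      by (intro lat_sum lat_int) auto
    moreover have "norm (x - \<mu>) \<le> (\<Sum>v\<in>Bs. norm v)"
    proof -
      have "x - \<mu> = (\<Sum>v\<in>Bs. (u v - real_of_int \<lfloor>u v\<rfloor>) *\<^sub>R v)"
        unfolding u \<mu>_def by (simp add: sum_subtractf scaleR_diff_left)
      also have "norm \<dots> \<le> (\<Sum>v\<in>Bs. norm ((u v - real_of_int \<lfloor>u v\<rfloor>) *\<^sub>R v))"
        by (rule norm_sum)
      also have "\<dots> \<le> (\<Sum>v\<in>Bs. norm v)"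
      proof (rule sum_mono)
        fix v
        have "\<bar>u v - real_of_int \<lfloor>u v\<rfloor>\<bar> \<le> 1" by linarith
        then show "norm ((u v - real_of_int \<lfloor>u v\<rfloor>) *\<^sub>R v) \<le> norm v"
          by (simp add: mult_left_le_one_le)
      qed
      finally show ?thesis .
    qed
    ultimately show "\<exists>\<mu>\<in>L. norm (x - \<mu>) \<le> (\<Sum>v\<in>Bs. norm v)" by blast
  qed
qed

lemma rs_zero: "0 \<in> rat_span L"
  unfolding rat_span_def by (rule CollectI, rule exI[of _ "{}"]) auto

lemma rs_base: "c \<in> \<rat> \<Longrightarrow> l \<in> L \<Longrightarrow> c *\<^sub>R l \<in> rat_span L"
  unfolding rat_span_def by (rule CollectI, rule exI[of _ "{l}"], rule exI[of _ "\<lambda>_. c"]) auto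

lemma rs_add:
  assumes "x \<in> rat_span L" "y \<in> rat_span L"
  shows "x + y \<in> rat_span L"
proof -
  obtain S1 c1 where 1: "finite S1" "S1 \<subseteq> L" "\<forall>l\<in>S1. c1 l \<in> \<rat>" "x = (\<Sum>l\<in>S1. c1 l *\<^sub>R l)"
    using assms(1) unfolding rat_span_def by blast
  obtain S2 c2 where 2: "finite S2" "S2 \<subseteq> L" "\<forall>l\<in>S2. c2 l \<in> \<rat>" "y = (\<Sum>l\<in>S2. c2 l *\<^sub>R l)"
    using assms(2) unfolding rat_span_def by blast
  define c where "c l = (if l \<in> S1 then c1 l else 0) + (if l \<in> S2 then c2 l else 0)" for l
  have e1: "(\<Sum>l\<in>S1 \<union> S2. (if l \<in> S1 then c1 l else 0) *\<^sub>R l) = x"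
    unfolding 1(4) by (rule sum.mono_neutral_cong_right) (use 1 2 in auto)
  have e2: "(\<Sum>l\<in>S1 \<union> S2. (if l \<in> S2 then c2 l else 0) *\<^sub>R l) = y"
    unfolding 2(4) by (rule sum.mono_neutral_cong_right) (use 1 2 in auto)
  have "x + y = (\<Sum>l\<in>S1 \<union> S2. c l *\<^sub>R l)"
    unfolding c_def scaleR_add_left sum.distrib e1 e2 by (rule refl)
  moreover have "\<forall>l\<in>S1 \<union> S2. c l \<in> \<rat>" using 1(3) 2(3) unfolding c_def by auto
  ultimately show ?thesis unfolding rat_span_def using 1(1,2) 2(1,2)
    by (intro CollectI exI[of _ "S1 \<union> S2"] exI[of _ c]) auto
qed

lemma nt_lemma:
  assumes mi: "mult_independent p q" and p: "p \<ge> 2" and q: "q \<ge> 2"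
    and e: "p ^ a * q ^ i' = p ^ a' * q ^ (i::nat)"
  shows "a = (a'::nat)"
proof -
  have gen: "a = a'" if mi: "mult_independent p q" and p: "p \<ge> 2" and q: "q \<ge> 2"
    and e: "p ^ a * q ^ i' = p ^ a' * q ^ (i::nat)" and le: "a \<le> a'" for p q a a' i i' :: nat
  proof -
    define d where "d = a' - a"
    have "p ^ a' = p ^ a * p ^ d" unfolding d_def using le by (simp add: power_add[symmetric])
    then have e2: "q ^ i' = p ^ d * q ^ i" using e p by simp
    have "i \<le> i'"
    proof (rule ccontr)
      assume "\<not> i \<le> i'"
      then have "q ^ i' < q ^ i" using q by (intro power_strict_increasing) auto
      also have "\<dots> \<le> p ^ d * q ^ i" using p by simp
      finally show False using e2 by simp
    qed
    then have "q ^ i' = q ^ i * q ^ (i' - i)" by (simp add: power_add[symmetric])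
    then have "p ^ d = q ^ (i' - i)" using e2 q by simp
    then have "d = 0" using mi unfolding mult_independent_def by blast
    then show ?thesis using le d_def by simp
  qed
  show ?thesis
  proof (cases "a \<le> a'")
    case True then show ?thesis using gen[OF mi p q e] by simp
  next
    case False then show ?thesis using gen[OF mi p q e[symmetric]] by simp
  qed
qed

lemma coset_cancel:
  assumes "group G" "subgroup H G" "g \<in> carrier G" "b \<in> H" "b <#\<^bsub>G\<^esub> (g <#\<^bsub>G\<^esub> H) = H"
  shows "g <#\<^bsub>G\<^esub> H = H"
proof -
  interpret group G by fact
  have bc: "b \<in> carrier G" using assms(2,4) subgroup.subset by blast
  have Hc: "H \<subseteq> carrier G" using assms(2) subgroup.subset by blast
  have "(b \<otimes>\<^bsub>G\<^esub> g) <#\<^bsub>G\<^esub> H = H" using assms(5) lcos_m_assoc[OF Hc bc assms(3)] by simp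
  moreover have "b \<otimes>\<^bsub>G\<^esub> g \<in> (b \<otimes>\<^bsub>G\<^esub> g) <#\<^bsub>G\<^esub> H"
    using subgroup.one_closed[OF assms(2)] bc assms(3) unfolding l_coset_def
    by (auto intro!: bexI[of _ "\<one>\<^bsub>G\<^esub>"])
  ultimately have bg: "b \<otimes>\<^bsub>G\<^esub> g \<in> H" by simp
  have "g = inv\<^bsub>G\<^esub> b \<otimes>\<^bsub>G\<^esub> (b \<otimes>\<^bsub>G\<^esub> g)" using bc assms(3) by (simp add: m_assoc[symmetric])
  also have "\<dots> \<in> H" using bg assms(2,4) by (simp add: subgroup.m_closed subgroup.m_inv_closed)
  finally show ?thesis using coset_join3[OF assms(3) assms(2)] by simp
qed

lemma hom_lcoset:
  assumes "h \<in> hom G1 G2" "a \<in> carrier G1" "S \<subseteq> carrier G1"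
  shows "h ` (a <#\<^bsub>G1\<^esub> S) = h a <#\<^bsub>G2\<^esub> (h ` S)"
  using assms unfolding l_coset_def image_UN by (auto simp: hom_mult subsetD)

theorem proposition2p6:
  fixes G :: "'v::euclidean_space \<Rightarrow> 'g monoid"
    and sect :: "'v set \<Rightarrow> ('v \<Rightarrow> 'g) \<Rightarrow> bool"
    and H :: "'v \<Rightarrow> 'g set"
    and iota :: "'v \<Rightarrow> 'v \<Rightarrow> 'g \<Rightarrow> 'g"
    and phi :: "real \<Rightarrow> 'v \<Rightarrow> 'g \<Rightarrow> 'g"
    and \<Lambda> :: "'v set"
    and p q :: nat
    and s :: "'v \<Rightarrow> 'g set"
    and A B :: "'v \<Rightarrow> 'g"
  assumes eq: "equivariant_sheaf_of_cosets G sect H iota phi"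
    and lat: "is_lattice \<Lambda>"
    and p2: "p \<ge> 2" and q2: "q \<ge> 2"
    and indep: "mult_independent p q"
    and s_sec: "coset_global_section G sect H s"
    and A_sec: "sect UNIV A" and B_sec: "sect UNIV B"
    and A_per: "\<forall>l\<in>\<Lambda>. \<forall>x. iota l (x - l) (A (x - l)) = A x"
    and B_per: "\<forall>l\<in>\<Lambda>. \<forall>x. iota l (x - l) (B (x - l)) = B x"
    and sp: "\<forall>x. phi (real p) (inverse (real p) *\<^sub>R x) ` s (inverse (real p) *\<^sub>R x)
               = A x <#\<^bsub>G x\<^esub> s x"
    and sq: "\<forall>x. phi (real q) (inverse (real q) *\<^sub>R x) ` s (inverse (real q) *\<^sub>R x)
               = B x <#\<^bsub>G x\<^esub> s x"
  shows "(\<exists>\<Lambda>'. is_lattice \<Lambda>' \<and> \<Lambda>' \<subseteq> \<Lambda> \<and>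
            (\<forall>z. z \<notin> rat_span \<Lambda> \<longrightarrow> (\<forall>l\<in>\<Lambda>'. s (z + l) = iota l z ` s z)))
       \<and> (coprime p q \<longrightarrow>
            (\<forall>z. z \<notin> rat_span \<Lambda> \<longrightarrow> (\<forall>l\<in>\<Lambda>. s (z + l) = iota l z ` s z)))"
proof -
  let ?pp = "real p" and ?qq = "real q"
  note E = eq[unfolded equivariant_sheaf_of_cosets_def]
  note SG = E[THEN conjunct1, unfolded sheaf_of_groups_def]
  note E1 = E[THEN conjunct2]
  note SS = E1[THEN conjunct1, unfolded subsheaf_of_subgroups_def]
  note E2 = E1[THEN conjunct2]
  note E3 = E2[THEN conjunct2]
  note E4 = E3[THEN conjunct2]
  note E5 = E4[THEN conjunct2]
  note E6 = E5[THEN conjunct2]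
  note E7 = E6[THEN conjunct2]
  note E8 = E7[THEN conjunct2]
  note E9 = E8[THEN conjunct2]
  note E10 = E9[THEN conjunct2]
  have grp: "\<And>x. group (G x)" using SG[THEN conjunct1] by blast
  have Hsub: "\<And>x. subgroup (H x) (G x)" using SS[THEN conjunct1] by blast
  have sectcar: "\<And>U f x. sect U f \<Longrightarrow> x \<in> U \<Longrightarrow> f x \<in> carrier (G x)"
    using SG[THEN conjunct2, THEN conjunct1] by blast
  have Dis: "\<And>U f K. sect U f \<Longrightarrow> compact K \<Longrightarrow> K \<subseteq> U \<Longrightarrow> finite {x\<in>K. f x \<notin> H x}"
    using E2[THEN conjunct1] by blast
  have iota_iso: "\<And>v x. iota v x \<in> iso (G x) (G (x + v))" using E3[THEN conjunct1] by blast
  have iota_H: "\<And>v x. iota v x ` H x = H (x + v)" using E6[THEN conjunct1] by blast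
  have phi_iso: "\<And>r x. r \<noteq> 0 \<Longrightarrow> phi r x \<in> iso (G x) (G (r *\<^sub>R x))" using E7[THEN conjunct1] by blast
  have phi_H: "\<And>r x. r \<noteq> 0 \<Longrightarrow> phi r x ` H x = H (r *\<^sub>R x)" using E10[THEN conjunct1] by blast
  have compat: "\<And>r v x g. r \<noteq> 0 \<Longrightarrow> g \<in> carrier (G x) \<Longrightarrow>
      iota (r *\<^sub>R v) (r *\<^sub>R x) (phi r x g) = phi r (x + v) (iota v x g)" using E10[THEN conjunct2] by blast
  have iota_hom: "\<And>v x. iota v x \<in> hom (G x) (G (x + v))" using iota_iso by (simp add: iso_def)
  have s_loc: "\<And>x. \<exists>W f. open W \<and> x \<in> W \<and> sect W f \<and> (\<forall>y\<in>W. s y = f y <#\<^bsub>G y\<^esub> H y)"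
    using s_sec unfolding coset_global_section_def by blast
  have s_rep: "\<exists>g\<in>carrier (G x). s x = g <#\<^bsub>G x\<^esub> H x" for x
  proof -
    obtain W f where "open W" "x \<in> W" "sect W f" "\<forall>y\<in>W. s y = f y <#\<^bsub>G y\<^esub> H y"
      using s_loc[of x] by blast
    then show ?thesis using sectcar by blast
  qed
  have s_car: "s x \<subseteq> carrier (G x)" for x
    using s_rep[of x] group.l_coset_subset_G[OF grp] subgroup.subset[OF Hsub] by metis
  have pp0: "?pp \<noteq> 0" and qq0: "?qq \<noteq> 0" and qq1: "1 < ?qq" using p2 q2 by auto
  define D where "D = {x. s x \<noteq> H x}"

  have L3: "s (y + \<mu>) = iota \<mu> y ` s y"
    if mu: "\<mu> \<in> \<Lambda>" and h: "s (?pp *\<^sub>R y + ?pp *\<^sub>R \<mu>) = iota (?pp *\<^sub>R \<mu>) (?pp *\<^sub>R y) ` s (?pp *\<^sub>R y)"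
    for y \<mu>
  proof -
    define X where "X = ?pp *\<^sub>R y"
    define M where "M = ?pp *\<^sub>R \<mu>"
    have M: "M \<in> \<Lambda>" unfolding M_def by (rule lat_nat[OF lat mu])
    have AM: "A (X + M) = iota M X (A X)" using A_per M by (metis add_diff_cancel_right')
    have i1: "inverse ?pp *\<^sub>R (X + M) = y + \<mu>" unfolding X_def M_def using pp0
      by (simp add: scaleR_add_right)
    have i2: "inverse ?pp *\<^sub>R X = y" unfolding X_def using pp0 by simp
    have spy: "phi ?pp (y + \<mu>) ` s (y + \<mu>) = A (X + M) <#\<^bsub>G (X + M)\<^esub> s (X + M)"
      using sp[rule_format, of "X + M"] i1 by simp
    have spX: "phi ?pp y ` s y = A X <#\<^bsub>G X\<^esub> s X"
      using sp[rule_format, of "X"] i2 by simp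
    have hX: "s (X + M) = iota M X ` s X" using h unfolding X_def M_def .
    have "phi ?pp (y + \<mu>) ` s (y + \<mu>) = iota M X (A X) <#\<^bsub>G (X + M)\<^esub> (iota M X ` s X)"
      using spy AM hX by simp
    also have "\<dots> = iota M X ` (A X <#\<^bsub>G X\<^esub> s X)"
      by (rule hom_lcoset[symmetric, OF iota_hom sectcar[OF A_sec] s_car]) simp
    also have "\<dots> = iota M X ` (phi ?pp y ` s y)" using spX by simp
    also have "\<dots> = phi ?pp (y + \<mu>) ` (iota \<mu> y ` s y)"
      unfolding image_image X_def M_def
      by (intro image_cong refl) (meson compat[OF pp0] s_car subsetD)
    finally have eqimg: "phi ?pp (y + \<mu>) ` s (y + \<mu>) = phi ?pp (y + \<mu>) ` (iota \<mu> y ` s y)" .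
    have inj: "inj_on (phi ?pp (y + \<mu>)) (carrier (G (y + \<mu>)))"
      using phi_iso[OF pp0] by (simp add: iso_def bij_betw_def)
    have sub2: "iota \<mu> y ` s y \<subseteq> carrier (G (y + \<mu>))"
      using hom_carrier[OF iota_hom[of \<mu> y]] s_car[of y] by blast
    show ?thesis using inj_on_image_eq_iff[OF inj s_car sub2] eqimg by simp
  qed

  have iter: "s (?pp^a *\<^sub>R z + ?pp^a *\<^sub>R l) \<noteq> iota (?pp^a *\<^sub>R l) (?pp^a *\<^sub>R z) ` s (?pp^a *\<^sub>R z)"
    if l: "l \<in> \<Lambda>" and ne: "s (z + l) \<noteq> iota l z ` s z" for z l a
  proof (induction a)
    case 0 then show ?case using ne by simp
  next
    case (Suc a)
    have pw: "?pp^(Suc a) *\<^sub>R v = ?pp *\<^sub>R (?pp^a *\<^sub>R v)" for v :: 'v by simp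
    have mu: "?pp^a *\<^sub>R l \<in> \<Lambda>" using lat_nat[OF lat l, of "p^a"] by simp
    show ?case unfolding pw using L3[OF mu] Suc.IH by blast
  qed

  have L4: "y \<in> D \<or> y + \<mu> \<in> D" if "s (y + \<mu>) \<noteq> iota \<mu> y ` s y" for y \<mu>
  proof (rule ccontr)
    assume "\<not> (y \<in> D \<or> y + \<mu> \<in> D)"
    then have "s y = H y" "s (y + \<mu>) = H (y + \<mu>)" unfolding D_def by auto
    then show False using that iota_H[of \<mu> y] by simp
  qed

  have L6: "\<exists>i. B ((inverse ?qq)^i *\<^sub>R x) \<notin> H ((inverse ?qq)^i *\<^sub>R x)"
    if x0: "x \<noteq> 0" and xD: "x \<in> D" for x
  proof (rule ccontr)
    assume nex: "\<not> (\<exists>i. B ((inverse ?qq)^i *\<^sub>R x) \<notin> H ((inverse ?qq)^i *\<^sub>R x))"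
    define y where "y i = (inverse ?qq)^i *\<^sub>R x" for i
    have allD: "y i \<in> D" for i
    proof (induction i)
      case 0 then show ?case using xD by (simp add: y_def)
    next
      case (Suc i)
      have By: "B (y i) \<in> H (y i)" using nex y_def by auto
      have yS: "y (Suc i) = inverse ?qq *\<^sub>R y i" by (simp add: y_def)
      show ?case
      proof (rule ccontr)
        assume "y (Suc i) \<notin> D"
        then have sH: "s (inverse ?qq *\<^sub>R y i) = H (inverse ?qq *\<^sub>R y i)" using yS D_def by simp
        have "phi ?qq (inverse ?qq *\<^sub>R y i) ` s (inverse ?qq *\<^sub>R y i) = H (y i)"
          using sH phi_H[OF qq0] qq0 by simp
        then have bs: "B (y i) <#\<^bsub>G (y i)\<^esub> s (y i) = H (y i)" using sq[rule_format, of "y i"] by simp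
        obtain g where g: "g \<in> carrier (G (y i))" "s (y i) = g <#\<^bsub>G (y i)\<^esub> H (y i)"
          using s_rep by blast
        have "s (y i) = H (y i)" using coset_cancel[OF grp Hsub g(1) By] bs g(2) by simp
        then show False using Suc.IH D_def by simp
      qed
    qed
    obtain W f where W: "open W" "0 \<in> W" "sect W f" "\<forall>y\<in>W. s y = f y <#\<^bsub>G y\<^esub> H y"
      using s_loc[of 0] by blast
    obtain e where e: "e > 0" "cball 0 e \<subseteq> W" using open_contains_cball W(1,2) by blast
    have fin: "finite {v \<in> cball 0 e. f v \<notin> H v}" using Dis[OF W(3) compact_cball e(2)] .
    have nx: "norm x > 0" using x0 by simp
    obtain N where N: "(inverse ?qq)^N < e / norm x"
    proof -
      have "inverse ?qq < 1" using qq1 by (simp add: inverse_less_1_iff)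
      moreover have "0 < e / norm x" using e nx by simp
      ultimately show ?thesis using real_arch_pow_inv[of "e / norm x" "inverse ?qq"] that by blast
    qed
    have inS: "y i \<in> {v \<in> cball 0 e. f v \<notin> H v}" if "i \<ge> N" for i
    proof -
      have "norm (y i) = (inverse ?qq)^i * norm x" by (simp add: y_def)
      also have "\<dots> \<le> (inverse ?qq)^N * norm x" using that qq1
        by (intro mult_right_mono power_decreasing) (auto simp: inverse_le_1_iff)
      also have "\<dots> < e" using N nx by (simp add: less_divide_eq)
      finally have yc: "y i \<in> cball 0 e" by simp
      then have yW: "y i \<in> W" using e by auto
      then have "s (y i) = f (y i) <#\<^bsub>G (y i)\<^esub> H (y i)" using W by auto
      moreover have "s (y i) \<noteq> H (y i)" using allD D_def by auto
      ultimately have "f (y i) \<notin> H (y i)"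
        using group.coset_join3[OF grp sectcar[OF W(3) yW] Hsub] by auto
      with yc show ?thesis by simp
    qed
    have inj: "inj_on y {N..}"
    proof (rule inj_onI)
      fix i j assume "y i = y j"
      then have "(inverse ?qq)^i = (inverse ?qq)^j" using x0 by (simp add: y_def scaleR_cancel_right)
      then have "?qq^i = ?qq^j" by (simp add: power_inverse)
      then show "i = j" using qq1 by (simp add: power_inject_exp)
    qed
    have "finite {N..}" using inj_on_finite[OF inj _ fin] inS by auto
    then show False using infinite_Ici by blast
  qed

  obtain R where R: "\<forall>x. \<exists>\<mu>\<in>\<Lambda>. norm (x - \<mu>) \<le> R" using lat_fund[OF lat] by blast
  have finB: "finite {v \<in> cball 0 R. B v \<notin> H v}" using Dis[OF B_sec compact_cball, of 0 R] by simp
  have Bper: "B x \<in> H x" if "\<mu> \<in> \<Lambda>" "B (x - \<mu>) \<in> H (x - \<mu>)" for x \<mu>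
  proof -
    have "B x = iota \<mu> (x - \<mu>) (B (x - \<mu>))" using B_per that(1) by simp
    also have "\<dots> \<in> iota \<mu> (x - \<mu>) ` H (x - \<mu>)" using that(2) by simp
    also have "\<dots> = H x" using iota_H[of \<mu> "x - \<mu>"] by simp
    finally show ?thesis .
  qed

  have L5: "finite {a. ?pp^a *\<^sub>R w \<in> D}" if w: "w \<notin> rat_span \<Lambda>" for w
  proof -
    have w0: "w \<noteq> 0" using w rs_zero by auto
    define S where "S = {a. ?pp^a *\<^sub>R w \<in> D}"
    have "\<forall>a\<in>S. \<exists>i. B ((inverse ?qq)^i *\<^sub>R (?pp^a *\<^sub>R w)) \<notin> H ((inverse ?qq)^i *\<^sub>R (?pp^a *\<^sub>R w))"
    proof
      fix a assume "a \<in> S"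
      then have aD: "?pp^a *\<^sub>R w \<in> D" unfolding S_def by simp
      have a0: "?pp^a *\<^sub>R w \<noteq> 0" using w0 pp0 by simp
      show "\<exists>i. B ((inverse ?qq)^i *\<^sub>R (?pp^a *\<^sub>R w)) \<notin> H ((inverse ?qq)^i *\<^sub>R (?pp^a *\<^sub>R w))"
        by (rule L6[OF a0 aD])
    qed
    then obtain ii where ii: "\<forall>a\<in>S. B ((inverse ?qq)^(ii a) *\<^sub>R (?pp^a *\<^sub>R w)) \<notin> H ((inverse ?qq)^(ii a) *\<^sub>R (?pp^a *\<^sub>R w))"
      by metis
    define r where "r a = (inverse ?qq)^(ii a) * ?pp^a" for a
    have rB: "\<forall>a\<in>S. B (r a *\<^sub>R w) \<notin> H (r a *\<^sub>R w)" using ii by (simp add: r_def)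
    have "\<forall>a. \<exists>m. m \<in> \<Lambda> \<and> norm (r a *\<^sub>R w - m) \<le> R" using R by blast
    then have "\<exists>mu. \<forall>a. mu a \<in> \<Lambda> \<and> norm (r a *\<^sub>R w - mu a) \<le> R" by (rule choice)
    then obtain mu where mu: "\<forall>a. mu a \<in> \<Lambda> \<and> norm (r a *\<^sub>R w - mu a) \<le> R" by blast
    define g where "g a = r a *\<^sub>R w - mu a" for a
    have gin: "g ` S \<subseteq> {v \<in> cball 0 R. B v \<notin> H v}"
    proof
      fix v assume "v \<in> g ` S"
      then obtain a where a: "a \<in> S" "v = g a" by blast
      have "norm v \<le> R" using mu a unfolding g_def by simp
      moreover have "B v \<notin> H v"
      proof
        assume "B v \<in> H v"
        then have "B (r a *\<^sub>R w - mu a) \<in> H (r a *\<^sub>R w - mu a)" using a g_def by simp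
        then have "B (r a *\<^sub>R w) \<in> H (r a *\<^sub>R w)" using Bper mu by blast
        then show False using rB a by blast
      qed
      ultimately show "v \<in> {v \<in> cball 0 R. B v \<notin> H v}" by simp
    qed
    have rQ: "r a \<in> \<rat>" for a unfolding r_def by (simp add: Rats_mult Rats_power Rats_inverse)
    have ginj: "inj_on g S"
    proof (rule inj_onI)
      fix a a' assume "a \<in> S" "a' \<in> S" "g a = g a'"
      then have d: "(r a - r a') *\<^sub>R w = mu a - mu a'" by (simp add: g_def algebra_simps)
      have req: "r a = r a'"
      proof (rule ccontr)
        assume ne: "r a \<noteq> r a'"
        then have "w = inverse (r a - r a') *\<^sub>R ((r a - r a') *\<^sub>R w)" by simp
        then have weq: "w = inverse (r a - r a') *\<^sub>R (mu a - mu a')" using d by simp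
        have "mu a - mu a' \<in> \<Lambda>" using lat mu unfolding is_lattice_def by blast
        moreover have "inverse (r a - r a') \<in> \<rat>" using rQ by (simp add: Rats_diff Rats_inverse)
        ultimately have "w \<in> rat_span \<Lambda>" using rs_base weq by metis
        with w show False ..
      qed
      have "?pp^a / ?qq^(ii a) = ?pp^a' / ?qq^(ii a')"
        using req by (simp add: r_def power_inverse divide_inverse mult.commute)
      then have "?pp^a * ?qq^(ii a') = ?pp^a' * ?qq^(ii a)" using qq0 by (simp add: frac_eq_eq)
      then have "p^a * q^(ii a') = p^a' * q^(ii a)"
        by (simp only: of_nat_power[symmetric] of_nat_mult[symmetric] of_nat_eq_iff)
      then show "a = a'" using nt_lemma[OF indep p2 q2] by blast
    qed
    show ?thesis using inj_on_finite[OF ginj gin finB] unfolding S_def .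
  qed

  have key: "\<forall>z. z \<notin> rat_span \<Lambda> \<longrightarrow> (\<forall>l\<in>\<Lambda>. s (z + l) = iota l z ` s z)"
  proof (intro allI impI ballI, rule ccontr)
    fix z l assume z: "z \<notin> rat_span \<Lambda>" and l: "l \<in> \<Lambda>" and ne: "s (z + l) \<noteq> iota l z ` s z"
    have zl: "z + l \<notin> rat_span \<Lambda>"
    proof
      assume "z + l \<in> rat_span \<Lambda>"
      moreover have "(-1) *\<^sub>R l \<in> rat_span \<Lambda>" using rs_base[of "-1" l \<Lambda>] l by simp
      ultimately have "z + l + (-1) *\<^sub>R l \<in> rat_span \<Lambda>" by (rule rs_add)
      then show False using z by simp
    qed
    have "UNIV \<subseteq> {a. ?pp^a *\<^sub>R z \<in> D} \<union> {a. ?pp^a *\<^sub>R (z + l) \<in> D}"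
    proof
      fix a :: nat
      have "s (?pp^a *\<^sub>R z + ?pp^a *\<^sub>R l) \<noteq> iota (?pp^a *\<^sub>R l) (?pp^a *\<^sub>R z) ` s (?pp^a *\<^sub>R z)"
        by (rule iter[OF l ne])
      from L4[OF this] show "a \<in> {a. ?pp^a *\<^sub>R z \<in> D} \<union> {a. ?pp^a *\<^sub>R (z + l) \<in> D}"
        by (simp add: scaleR_add_right)
    qed
    moreover have "finite {a. ?pp^a *\<^sub>R z \<in> D}" using L5[OF z] .
    moreover have "finite {a. ?pp^a *\<^sub>R (z + l) \<in> D}" using L5[OF zl] .
    ultimately have "finite (UNIV :: nat set)" by (meson finite_Un finite_subset)
    then show False by simp
  qed
  show ?thesis using key lat by blast
qed

end
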